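(* Let $\mathbf{A}$ be a three-element Mal'cev algebra whose monolith $\mu$ is Abelian. Then $(0_A:\mu)=\mu$.
   Context: A Mal'cev algebra has a term $d$ with $d(y,x,x)\approx d(x,x,y)\approx y$. The monolith of $\mathbf{A}$ is the least congruence strictly above the equality relation $0_A$ (it is $1_A=A^2$ if $\mathbf{A}$ is simple). For congruences $\alpha,\beta$, $\alpha$ centralizes $\beta$ if the relation $\{(x,y,z,d(x,y,z)): x\,\alpha\,y\,\beta\,z\}$ is preserved by all operations of $\mathbf{A}$; $\alpha$ is Abelian if $\alpha$ centralizes $\alpha$; the centralizer $(0_A:\alpha)$ is the largest congruence $\delta$ such that $\alpha$ centralizes $\delta$. *)

theory Defs
  imports Main
begin

text \<open>An algebra is given by a carrier A :: 'a set and a set F of fundamental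
operations; each operation is a pair (n, f) where n is its arity and f acts on
argument lists of length n.\<close>

definition is_algebra :: "'a set \<Rightarrow> (nat \<times> ('a list \<Rightarrow> 'a)) set \<Rightarrow> bool" where
  "is_algebra A F \<longleftrightarrow> A \<noteq> {} \<and>
     (\<forall>(n, f) \<in> F. \<forall>xs. length xs = n \<and> set xs \<subseteq> A \<longrightarrow> f xs \<in> A)"

inductive_set term_ops :: "(nat \<times> ('a list \<Rightarrow> 'a)) set \<Rightarrow> (nat \<times> ('a list \<Rightarrow> 'a)) set"
  for F where
  proj: "i < n \<Longrightarrow> (n, \<lambda>xs. xs ! i) \<in> term_ops F"
| comp: "(m, f) \<in> F \<Longrightarrow> (\<forall>j<m. (n, g j) \<in> term_ops F) \<Longrightarrow>
         (n, \<lambda>xs. f (map (\<lambda>j. g j xs) [0..<m])) \<in> term_ops F"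

definition malcev_term :: "'a set \<Rightarrow> (nat \<times> ('a list \<Rightarrow> 'a)) set \<Rightarrow> ('a list \<Rightarrow> 'a) \<Rightarrow> bool" where
  "malcev_term A F d \<longleftrightarrow> (3, d) \<in> term_ops F \<and>
     (\<forall>x\<in>A. \<forall>y\<in>A. d [y, x, x] = y \<and> d [x, x, y] = y)"

definition congruence :: "'a set \<Rightarrow> (nat \<times> ('a list \<Rightarrow> 'a)) set \<Rightarrow> 'a rel \<Rightarrow> bool" where
  "congruence A F \<theta> \<longleftrightarrow> equiv A \<theta> \<and>
     (\<forall>(n, f) \<in> F. \<forall>xs ys. length xs = n \<and> length ys = n \<and>
        (\<forall>i<n. (xs ! i, ys ! i) \<in> \<theta>) \<longrightarrow> (f xs, f ys) \<in> \<theta>)"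

definition is_monolith :: "'a set \<Rightarrow> (nat \<times> ('a list \<Rightarrow> 'a)) set \<Rightarrow> 'a rel \<Rightarrow> bool" where
  "is_monolith A F \<mu> \<longleftrightarrow> congruence A F \<mu> \<and> \<mu> \<noteq> Id_on A \<and>
     (\<forall>\<theta>. congruence A F \<theta> \<and> \<theta> \<noteq> Id_on A \<longrightarrow> \<mu> \<subseteq> \<theta>)"

definition centr_rel :: "('a list \<Rightarrow> 'a) \<Rightarrow> 'a rel \<Rightarrow> 'a rel \<Rightarrow> ('a \<times> 'a \<times> 'a \<times> 'a) set" where
  "centr_rel d \<alpha> \<beta> = {(x, y, z, d [x, y, z]) | x y z. (x, y) \<in> \<alpha> \<and> (y, z) \<in> \<beta>}"

definition preserves :: "(nat \<times> ('a list \<Rightarrow> 'a)) \<Rightarrow> ('a \<times> 'a \<times> 'a \<times> 'a) set \<Rightarrow> bool" where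
  "preserves nf R \<longleftrightarrow> (case nf of (n, f) \<Rightarrow>
     (\<forall>t :: nat \<Rightarrow> 'a \<times> 'a \<times> 'a \<times> 'a. (\<forall>i<n. t i \<in> R) \<longrightarrow>
        (f (map (\<lambda>i. fst (t i)) [0..<n]),
         f (map (\<lambda>i. fst (snd (t i))) [0..<n]),
         f (map (\<lambda>i. fst (snd (snd (t i)))) [0..<n]),
         f (map (\<lambda>i. snd (snd (snd (t i)))) [0..<n])) \<in> R))"

definition centralizes :: "(nat \<times> ('a list \<Rightarrow> 'a)) set \<Rightarrow> ('a list \<Rightarrow> 'a) \<Rightarrow> 'a rel \<Rightarrow> 'a rel \<Rightarrow> bool" where
  "centralizes F d \<alpha> \<beta> \<longleftrightarrow> (\<forall>nf \<in> F. preserves nf (centr_rel d \<alpha> \<beta>))"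

definition abelian :: "(nat \<times> ('a list \<Rightarrow> 'a)) set \<Rightarrow> ('a list \<Rightarrow> 'a) \<Rightarrow> 'a rel \<Rightarrow> bool" where
  "abelian F d \<alpha> \<longleftrightarrow> centralizes F d \<alpha> \<alpha>"

definition is_centralizer :: "'a set \<Rightarrow> (nat \<times> ('a list \<Rightarrow> 'a)) set \<Rightarrow> ('a list \<Rightarrow> 'a) \<Rightarrow> 'a rel \<Rightarrow> 'a rel \<Rightarrow> bool" where
  "is_centralizer A F d \<alpha> \<delta> \<longleftrightarrow> congruence A F \<delta> \<and> centralizes F d \<alpha> \<delta> \<and>
     (\<forall>\<theta>. congruence A F \<theta> \<and> centralizes F d \<alpha> \<theta> \<longrightarrow> \<theta> \<subseteq> \<delta>)"

end

theory Submission
  imports Defs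
begin

lemma term_ops_preserve:
  assumes "(n,f) \<in> term_ops F" "\<forall>nf\<in>F. preserves nf R"
  shows "preserves (n,f) R"
  using assms(1)
proof induction
  case (proj i n)
  show ?case unfolding preserves_def prod.case
  proof (intro allI impI)
    fix t :: "nat \<Rightarrow> _" assume "\<forall>i<n. t i \<in> R"
    then have "t i \<in> R" using proj by auto
    then show "((map (\<lambda>i. fst (t i)) [0..<n]) ! i, (map (\<lambda>i. fst (snd (t i))) [0..<n]) ! i,
         (map (\<lambda>i. fst (snd (snd (t i)))) [0..<n]) ! i, (map (\<lambda>i. snd (snd (snd (t i)))) [0..<n]) ! i) \<in> R"
      using proj by (cases "t i") auto
  qed
next
  case (comp m f n g)
  show ?case unfolding preserves_def prod.case
  proof (intro allI impI)
    fix t :: "nat \<Rightarrow> _" assume t: "\<forall>i<n. t i \<in> R"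
    define t' where "t' = (\<lambda>j. (g j (map (\<lambda>i. fst (t i)) [0..<n]), g j (map (\<lambda>i. fst (snd (t i))) [0..<n]),
         g j (map (\<lambda>i. fst (snd (snd (t i)))) [0..<n]), g j (map (\<lambda>i. snd (snd (snd (t i)))) [0..<n])))"
    have "\<forall>j<m. t' j \<in> R"
    proof (intro allI impI)
      fix j assume "j < m"
      then have "preserves (n, g j) R" using comp by auto
      then show "t' j \<in> R" using t unfolding preserves_def t'_def by auto
    qed
    moreover have "preserves (m, f) R" using comp assms(2) by auto
    ultimately have "(f (map (\<lambda>i. fst (t' i)) [0..<m]), f (map (\<lambda>i. fst (snd (t' i))) [0..<m]),
         f (map (\<lambda>i. fst (snd (snd (t' i)))) [0..<m]), f (map (\<lambda>i. snd (snd (snd (t' i)))) [0..<m])) \<in> R"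
      unfolding preserves_def by auto
    then show "(f (map (\<lambda>j. g j (map (\<lambda>i. fst (t i)) [0..<n])) [0..<m]),
         f (map (\<lambda>j. g j (map (\<lambda>i. fst (snd (t i))) [0..<n])) [0..<m]),
         f (map (\<lambda>j. g j (map (\<lambda>i. fst (snd (snd (t i)))) [0..<n])) [0..<m]),
         f (map (\<lambda>j. g j (map (\<lambda>i. snd (snd (snd (t i)))) [0..<n])) [0..<m])) \<in> R"
      by (simp add: t'_def)
  qed
qed

lemma key:
  assumes mal: "malcev_term A F d"
    and cen: "centralizes F d \<mu> \<theta>"
    and A: "a \<in> A" "b \<in> A" "c \<in> A"
    and ab: "(a,b) \<in> \<mu>" and bb: "(b,b) \<in> \<mu>" "(b,b) \<in> \<theta>" and cc: "(c,c) \<in> \<mu>"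
    and cb: "(c,b) \<in> \<theta>"
    and sing: "\<forall>e. (e,c) \<in> \<mu> \<longrightarrow> e = c"
  shows "a = b"
proof -
  let ?R = "centr_rel d \<mu> \<theta>"
  have "preserves (3,d) ?R"
    using term_ops_preserve[of 3 d F ?R] mal cen unfolding malcev_term_def centralizes_def by auto
  define t :: "nat \<Rightarrow> _" where "t = (\<lambda>i. if i = 0 then (a,b,b,a) else if i = 1 then (b,b,b,b) else (c,c,b,b))"
  have d1: "d [a,b,b] = a" "d [b,b,b] = b" "d [c,c,b] = b" "d [b,b,c] = c"
    using mal A unfolding malcev_term_def by auto
  have "\<forall>i<3. t i \<in> ?R"
  proof (intro allI impI)
    fix i :: nat assume "i < 3"
    then have "i = 0 \<or> i = 1 \<or> i = 2" by auto
    moreover have "(a,b,b,a) \<in> ?R" unfolding centr_rel_def using d1 ab bb by force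
    moreover have "(b,b,b,b) \<in> ?R" unfolding centr_rel_def using d1 bb by force
    moreover have "(c,c,b,b) \<in> ?R" unfolding centr_rel_def using d1 cc cb by force
    ultimately show "t i \<in> ?R" unfolding t_def by auto
  qed
  have "(d [a,b,c], d [b,b,c], d [b,b,b], d [a,b,b]) \<in> ?R"
  proof -
    have m: "[0..<3] = [0,1,2::nat]" by (simp add: upt_rec)
    have "(d (map (\<lambda>i. fst (t i)) [0..<3]), d (map (\<lambda>i. fst (snd (t i))) [0..<3]),
         d (map (\<lambda>i. fst (snd (snd (t i)))) [0..<3]), d (map (\<lambda>i. snd (snd (snd (t i)))) [0..<3])) \<in> ?R"
      using \<open>preserves (3,d) ?R\<close> \<open>\<forall>i<3. t i \<in> ?R\<close> unfolding preserves_def prod.case by blast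
    then show ?thesis unfolding m by (simp add: t_def)
  qed
  then have "(d [a,b,c], c, b, a) \<in> ?R" using d1 by simp
  then obtain e where "(e,c) \<in> \<mu>" "a = d [e,c,b]" unfolding centr_rel_def by auto
  then show ?thesis using sing d1 by auto
qed

theorem lemma4p2:
  fixes A :: "'a set" and F :: "(nat \<times> ('a list \<Rightarrow> 'a)) set"
    and d :: "'a list \<Rightarrow> 'a" and \<mu> :: "'a rel"
  assumes "is_algebra A F"
    and "card A = 3"
    and "malcev_term A F d"
    and "is_monolith A F \<mu>"
    and "abelian F d \<mu>"
  shows "is_centralizer A F d \<mu> \<mu>"
proof -
  have cm: "congruence A F \<mu>" and mne: "\<mu> \<noteq> Id_on A"
    and mmin: "\<And>\<theta>. congruence A F \<theta> \<Longrightarrow> \<theta> \<noteq> Id_on A \<Longrightarrow> \<mu> \<subseteq> \<theta>"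
    using assms(4) unfolding is_monolith_def by auto
  have em: "equiv A \<mu>" using cm unfolding congruence_def by auto
  obtain x y where xy: "(x,y) \<in> \<mu>" "x \<noteq> y"
  proof -
    have "\<not> \<mu> \<subseteq> Id_on A"
    proof
      assume "\<mu> \<subseteq> Id_on A"
      moreover have "Id_on A \<subseteq> \<mu>" using em unfolding equiv_def refl_on_def by auto
      ultimately show False using mne by auto
    qed
    then obtain u v where "(u,v) \<in> \<mu>" "(u,v) \<notin> Id_on A" by auto
    moreover have "u \<in> A" "v \<in> A" using em \<open>(u,v) \<in> \<mu>\<close> unfolding equiv_def refl_on_def by auto
    ultimately show ?thesis using that by auto
  qed
  have xA: "x \<in> A" "y \<in> A" using em xy unfolding equiv_def refl_on_def by auto
  have "finite A" using assms(2) by (metis card.infinite zero_neq_numeral)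
  then have "card (A - {x,y}) = 1" using assms(2) xA xy by (simp add: card_Diff_subset)
  then obtain z where z: "A - {x,y} = {z}" by (metis card_1_singletonE)
  then have Aeq: "A = {x,y,z}" "z \<noteq> x" "z \<noteq> y" using xA by auto
  show ?thesis unfolding is_centralizer_def
  proof (intro conjI allI impI)
    show "congruence A F \<mu>" by (rule cm)
    show "centralizes F d \<mu> \<mu>" using assms(5) unfolding abelian_def .
    fix \<theta> assume th: "congruence A F \<theta> \<and> centralizes F d \<mu> \<theta>"
    have et: "equiv A \<theta>" using th unfolding congruence_def by auto
    show "\<theta> \<subseteq> \<mu>"
    proof
      fix pq assume pq: "pq \<in> \<theta>"
      obtain p q where pqd: "pq = (p,q)" by (cases pq)
      show "pq \<in> \<mu>"
      proof (rule ccontr)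
        assume npq: "pq \<notin> \<mu>"
        have pA: "p \<in> A" "q \<in> A" using et pq pqd unfolding equiv_def refl_on_def by auto
        have "p \<noteq> q" using npq pqd pA em unfolding equiv_def refl_on_def by auto
        then have "\<theta> \<noteq> Id_on A" using pq pqd by auto
        then have sub: "\<mu> \<subseteq> \<theta>" using mmin th by auto
        have mr: "\<And>u. u \<in> A \<Longrightarrow> (u,u) \<in> \<mu>" using em unfolding equiv_def refl_on_def by auto
        have ms: "\<And>u v. (u,v) \<in> \<mu> \<Longrightarrow> (v,u) \<in> \<mu>" using em unfolding equiv_def sym_def by auto
        have mt: "\<And>u v w. (u,v) \<in> \<mu> \<Longrightarrow> (v,w) \<in> \<mu> \<Longrightarrow> (u,w) \<in> \<mu>"
          using em unfolding equiv_def trans_def by blast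
        have ts: "\<And>u v. (u,v) \<in> \<theta> \<Longrightarrow> (v,u) \<in> \<theta>" using et unfolding equiv_def sym_def by auto
        have tt: "\<And>u v w. (u,v) \<in> \<theta> \<Longrightarrow> (v,w) \<in> \<theta> \<Longrightarrow> (u,w) \<in> \<theta>"
          using et unfolding equiv_def trans_def by blast
        have xym: "(y,x) \<in> \<mu>" using ms xy by auto
        have inxy: "\<And>u v. u \<in> {x,y} \<Longrightarrow> v \<in> {x,y} \<Longrightarrow> (u,v) \<in> \<mu>"
          using mr xA xy xym by auto
        have full: "(z,x) \<in> \<mu> \<Longrightarrow> False"
        proof -
          assume zx: "(z,x) \<in> \<mu>"
          have "\<And>u. u \<in> A \<Longrightarrow> (u,x) \<in> \<mu>" using Aeq zx inxy by auto
          then have "(p,q) \<in> \<mu>" using pA ms mt by blast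
          then show False using npq pqd by simp
        qed
        have zy: "(z,y) \<notin> \<mu>" using full mt xym by blast
        have zx: "(z,x) \<notin> \<mu>" using full by blast
        have zyt: "(z,y) \<in> \<theta>"
        proof (cases "p = z")
          case True
          then have "q \<in> {x,y}" using pA Aeq \<open>p \<noteq> q\<close> by auto
          then have "(q,y) \<in> \<theta>" using inxy sub by auto
          then show ?thesis using tt pq pqd True by blast
        next
          case False
          then have pxy: "p \<in> {x,y}" using pA Aeq by auto
          show ?thesis
          proof (cases "q = z")
            case True
            have "(p,y) \<in> \<theta>" using pxy inxy sub by auto
            then show ?thesis using tt ts pq pqd True by blast
          next
            case False
            then have "q \<in> {x,y}" using pA Aeq by auto
            then have "(p,q) \<in> \<mu>" using inxy pxy by auto
            then show ?thesis using npq pqd by simp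
          qed
        qed
        have sing: "\<forall>e. (e,z) \<in> \<mu> \<longrightarrow> e = z"
        proof (intro allI impI)
          fix e assume "(e,z) \<in> \<mu>"
          moreover have "e \<in> A" using calculation em unfolding equiv_def refl_on_def by auto
          ultimately show "e = z" using zx zy ms Aeq by auto
        qed
        have "x = y"
          apply (rule key[OF assms(3), of \<mu> \<theta> x y z])
          using th xA Aeq xy em et zyt sing unfolding equiv_def refl_on_def by auto
        then show False using xy by simp
      qed
    qed
  qed
qed

end
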